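(* Let $X$ come from the $J$-state HMM of the context, let $L_0\in\mathbb N$, $L\ge0$, and let $h_1,\dots,h_{L_0}$ be functions for which the expectations below are finite. Define $M^x=(E_H[h_l(X_1)K_L(x,X_2)h_m(X_3)])_{l,m\le L_0}$, $P=(E_H[h_l(X_1)h_m(X_3)])_{l,m\le L_0}$, $D^x=\mathrm{diag}(K_L[f_j](x))_{j\le J}$, $O=(E_H[h_l(X_1)\mid\theta_1=j])_{l\le L_0,j\le J}$. Then $$M^x=O\,\mathrm{diag}(\pi)\,Q\,D^x\,Q\,O^\intercal,\qquad P=O\,\mathrm{diag}(\pi)\,Q^2\,O^\intercal.$$ Moreover, if $V\in\mathbb R^{L_0\times J}$ is such that $V^\intercal PV$ is invertible, then $B^x:=(V^\intercal PV)^{-1}V^\intercal M^xV$ satisfies $$B^x=(QO^\intercal V)^{-1}D^x(QO^\intercal V),$$ so the matrices $(B^x:x\in\mathbb R)$ are simultaneously diagonalisable, $B^x$ having eigenvalues $(K_L[f_j](x))_{j\le J}$.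
   Context: $J$-state HMM: $\theta=(\theta_n)$ is a Markov chain on $\{1,\dots,J\}$ with transition matrix $Q$ and $\theta_1\sim\pi$; given $\theta$, the $X_n$ are independent with Lebesgue densities $f_{\theta_n}$; $E_H$ is expectation under this model. $K$ is a bounded Lipschitz function supported in $[-1,1]$, $K_L(x,y)=2^LK(2^L(x-y))$ and $K_L[f](x)=\int K_L(x,y)f(y)\,dy$. *)

theory Defs
  imports "HOL-Analysis.Analysis"
begin

text \<open>Hidden states {1..J} are modelled by a finite type 'j; the index set {1..L0}
 of the test functions by a finite type 'l. Matrices are HOL-Analysis
 Cartesian matrices: real^'c^'r has rows indexed by 'r and columns by 'c.\<close>

definition diag_mat :: "real^'n \<Rightarrow> real^'n^'n" where
  "diag_mat v = (\<chi> i j. if i = j then v $ i else 0)"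

definition KL :: "(real \<Rightarrow> real) \<Rightarrow> nat \<Rightarrow> real \<Rightarrow> real \<Rightarrow> real" where
  "KL K L x y = 2 ^ L * K (2 ^ L * (x - y))"

definition KL_apply :: "(real \<Rightarrow> real) \<Rightarrow> nat \<Rightarrow> (real \<Rightarrow> real) \<Rightarrow> real \<Rightarrow> real" where
  "KL_apply K L f x = (LINT y|lborel. KL K L x y * f y)"

text \<open>HMM parameters: initial law p0 (p0 $ j = P(theta_1 = j)), transition matrix Q
 (Q $ i $ j = P(theta_(n+1) = j | theta_n = i)), emission densities f j.\<close>
definition hmm_params :: "real^'j \<Rightarrow> real^'j^'j \<Rightarrow> ('j::finite \<Rightarrow> real \<Rightarrow> real) \<Rightarrow> bool" where
  "hmm_params p0 Q f \<longleftrightarrow>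
     (\<forall>j. 0 \<le> p0 $ j) \<and> (\<Sum>j\<in>UNIV. p0 $ j) = 1 \<and>
     (\<forall>i j. 0 \<le> Q $ i $ j) \<and> (\<forall>i. (\<Sum>j\<in>UNIV. Q $ i $ j) = 1) \<and>
     (\<forall>j. f j \<in> borel_measurable borel \<and> (\<forall>x. 0 \<le> f j x) \<and>
          integrable lborel (f j) \<and> integral\<^sup>L lborel (f j) = 1)"

text \<open>Joint Lebesgue density of (X_1, X_2, X_3) under the HMM: summing over the
 hidden path (theta_1, theta_2, theta_3), which has probability p0 Q Q, and using
 conditional independence of the X_n given theta with densities f_(theta_n).\<close>
definition hmm_density3 :: "real^'j \<Rightarrow> real^'j^'j \<Rightarrow> ('j::finite \<Rightarrow> real \<Rightarrow> real)
    \<Rightarrow> real \<times> real \<times> real \<Rightarrow> real" where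
  "hmm_density3 p0 Q f = (\<lambda>(x1, x2, x3).
     (\<Sum>j1\<in>UNIV. \<Sum>j2\<in>UNIV. \<Sum>j3\<in>UNIV.
        p0 $ j1 * Q $ j1 $ j2 * Q $ j2 $ j3 * f j1 x1 * f j2 x2 * f j3 x3))"

abbreviation lborel3 :: "(real \<times> real \<times> real) measure" where
  "lborel3 \<equiv> lborel \<Otimes>\<^sub>M (lborel \<Otimes>\<^sub>M lborel)"

definition EH_integrable :: "real^'j \<Rightarrow> real^'j^'j \<Rightarrow> ('j::finite \<Rightarrow> real \<Rightarrow> real)
    \<Rightarrow> (real \<times> real \<times> real \<Rightarrow> real) \<Rightarrow> bool" where
  "EH_integrable p0 Q f g \<longleftrightarrow> integrable lborel3 (\<lambda>z. g z * hmm_density3 p0 Q f z)"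

definition EH :: "real^'j \<Rightarrow> real^'j^'j \<Rightarrow> ('j::finite \<Rightarrow> real \<Rightarrow> real)
    \<Rightarrow> (real \<times> real \<times> real \<Rightarrow> real) \<Rightarrow> real" where
  "EH p0 Q f g = (LINT z|lborel3. g z * hmm_density3 p0 Q f z)"

text \<open>E_H[h(X_1) | theta_1 = j] = integral of h against f j.\<close>
definition EH_cond1 :: "('j \<Rightarrow> real \<Rightarrow> real) \<Rightarrow> (real \<Rightarrow> real) \<Rightarrow> 'j \<Rightarrow> real" where
  "EH_cond1 f h j = (LINT x|lborel. h x * f j x)"

definition Mx :: "real^'j \<Rightarrow> real^'j^'j \<Rightarrow> ('j::finite \<Rightarrow> real \<Rightarrow> real)
    \<Rightarrow> (real \<Rightarrow> real) \<Rightarrow> nat \<Rightarrow> ('l::finite \<Rightarrow> real \<Rightarrow> real) \<Rightarrow> real \<Rightarrow> real^'l^'l" where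
  "Mx p0 Q f K L h x = (\<chi> l m. EH p0 Q f (\<lambda>(x1, x2, x3). h l x1 * KL K L x x2 * h m x3))"

definition Pmat :: "real^'j \<Rightarrow> real^'j^'j \<Rightarrow> ('j::finite \<Rightarrow> real \<Rightarrow> real)
    \<Rightarrow> ('l::finite \<Rightarrow> real \<Rightarrow> real) \<Rightarrow> real^'l^'l" where
  "Pmat p0 Q f h = (\<chi> l m. EH p0 Q f (\<lambda>(x1, x2, x3). h l x1 * h m x3))"

definition Dx :: "('j::finite \<Rightarrow> real \<Rightarrow> real) \<Rightarrow> (real \<Rightarrow> real) \<Rightarrow> nat \<Rightarrow> real \<Rightarrow> real^'j^'j" where
  "Dx f K L x = diag_mat (\<chi> j. KL_apply K L (f j) x)"

definition Omat :: "('j::finite \<Rightarrow> real \<Rightarrow> real) \<Rightarrow> ('l::finite \<Rightarrow> real \<Rightarrow> real) \<Rightarrow> real^'j^'l" where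
  "Omat f h = (\<chi> l j. EH_cond1 f (h l) j)"

end

theory Submission
  imports Defs
begin

lemma prod2:
  fixes a :: "'a \<Rightarrow> real" and b :: "'b \<Rightarrow> real"
  assumes "sigma_finite_measure M1" "sigma_finite_measure M2"
    and ia: "integrable M1 a" and ib: "integrable M2 b"
  shows "integrable (M1 \<Otimes>\<^sub>M M2) (\<lambda>(x,y). a x * b y)"
    and "integral\<^sup>L (M1 \<Otimes>\<^sub>M M2) (\<lambda>(x,y). a x * b y) = integral\<^sup>L M1 a * integral\<^sup>L M2 b"
proof -
  interpret pair_sigma_finite M1 M2
    using assms(1,2) by (simp add: pair_sigma_finite_def)
  have [measurable]: "a \<in> borel_measurable M1" "b \<in> borel_measurable M2"
    using ia ib by auto
  show I: "integrable (M1 \<Otimes>\<^sub>M M2) (\<lambda>(x,y). a x * b y)"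
  proof (rule Fubini_integrable)
    show "(\<lambda>(x,y). a x * b y) \<in> borel_measurable (M1 \<Otimes>\<^sub>M M2)" by measurable
    have "(\<lambda>x. \<integral>y. norm (case (x, y) of (x, y) \<Rightarrow> a x * b y) \<partial>M2) = (\<lambda>x. \<bar>a x\<bar> * (\<integral>y. \<bar>b y\<bar> \<partial>M2))"
      by (simp add: abs_mult)
    then show "integrable M1 (\<lambda>x. \<integral>y. norm (case (x, y) of (x, y) \<Rightarrow> a x * b y) \<partial>M2)"
      using ia by simp
    show "AE x in M1. integrable M2 (\<lambda>y. case (x, y) of (x, y) \<Rightarrow> a x * b y)"
      using ib by simp
  qed
  have "integral\<^sup>L (M1 \<Otimes>\<^sub>M M2) (\<lambda>(x,y). a x * b y) = (\<integral>x. (\<integral>y. a x * b y \<partial>M2) \<partial>M1)"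
    using integral_fst[of "\<lambda>x y. a x * b y"] I by simp
  also have "\<dots> = (\<integral>x. a x * integral\<^sup>L M2 b \<partial>M1)" by simp
  also have "\<dots> = integral\<^sup>L M1 a * integral\<^sup>L M2 b" by simp
  finally show "integral\<^sup>L (M1 \<Otimes>\<^sub>M M2) (\<lambda>(x,y). a x * b y) = integral\<^sup>L M1 a * integral\<^sup>L M2 b" .
qed

lemma prod3:
  fixes a b c :: "real \<Rightarrow> real"
  assumes ia: "integrable lborel a" and ib: "integrable lborel b" and ic: "integrable lborel c"
  shows "integrable lborel3 (\<lambda>(x,y,z). a x * (b y * c z))"
    and "integral\<^sup>L lborel3 (\<lambda>(x,y,z). a x * (b y * c z)) = integral\<^sup>L lborel a * integral\<^sup>L lborel b * integral\<^sup>L lborel c"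
proof -
  have sf: "sigma_finite_measure (lborel :: real measure)" by (rule lborel.sigma_finite_measure_axioms)
  have sf2: "sigma_finite_measure (lborel \<Otimes>\<^sub>M lborel :: (real \<times> real) measure)"
    by (rule sigma_finite_pair_measure[OF sf sf])
  have i2: "integrable (lborel \<Otimes>\<^sub>M lborel) (\<lambda>(y,z). b y * c z)"
    and e2: "integral\<^sup>L (lborel \<Otimes>\<^sub>M lborel) (\<lambda>(y,z). b y * c z) = integral\<^sup>L lborel b * integral\<^sup>L lborel c"
    using prod2[OF sf sf ib ic] by auto
  have eq: "(\<lambda>(x,y,z). a x * (b y * c z)) = (\<lambda>(x,w). a x * (case w of (y,z) \<Rightarrow> b y * c z))"
    by auto
  show "integrable lborel3 (\<lambda>(x,y,z). a x * (b y * c z))"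
    unfolding eq by (rule prod2(1)[OF sf sf2 ia i2])
  show "integral\<^sup>L lborel3 (\<lambda>(x,y,z). a x * (b y * c z)) = integral\<^sup>L lborel a * integral\<^sup>L lborel b * integral\<^sup>L lborel c"
    unfolding eq prod2(2)[OF sf sf2 ia i2] e2 by simp
qed


lemma EH_sep:
  fixes g1 g2 g3 :: "real \<Rightarrow> real" and f :: "'j::finite \<Rightarrow> real \<Rightarrow> real"
  assumes i1: "\<And>j. integrable lborel (\<lambda>x. g1 x * f j x)"
    and i2: "\<And>j. integrable lborel (\<lambda>x. g2 x * f j x)"
    and i3: "\<And>j. integrable lborel (\<lambda>x. g3 x * f j x)"
  shows "EH p0 Q f (\<lambda>(x1, x2, x3). g1 x1 * g2 x2 * g3 x3) =
    (\<Sum>j1\<in>UNIV. \<Sum>j2\<in>UNIV. \<Sum>j3\<in>UNIV. p0 $ j1 * Q $ j1 $ j2 * Q $ j2 $ j3 *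
       (LINT x|lborel. g1 x * f j1 x) * (LINT x|lborel. g2 x * f j2 x) * (LINT x|lborel. g3 x * f j3 x))"
proof -
  define T where "T j1 j2 j3 = (\<lambda>(x::real,y::real,z::real). (g1 x * f j1 x) * ((g2 y * f j2 y) * (g3 z * f j3 z)))" for j1 j2 j3
  have Ti: "integrable lborel3 (T j1 j2 j3)" for j1 j2 j3
    unfolding T_def by (rule prod3(1)[OF i1 i2 i3])
  have Te: "integral\<^sup>L lborel3 (T j1 j2 j3) = (LINT x|lborel. g1 x * f j1 x) * (LINT x|lborel. g2 x * f j2 x) * (LINT x|lborel. g3 x * f j3 x)" for j1 j2 j3
    unfolding T_def by (rule prod3(2)[OF i1 i2 i3])
  have eq: "(\<lambda>z. (case z of (x1, x2, x3) \<Rightarrow> g1 x1 * g2 x2 * g3 x3) * hmm_density3 p0 Q f z)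
     = (\<lambda>z. \<Sum>j1\<in>UNIV. \<Sum>j2\<in>UNIV. \<Sum>j3\<in>UNIV. p0 $ j1 * Q $ j1 $ j2 * Q $ j2 $ j3 * T j1 j2 j3 z)"
  proof (rule ext)
    fix z :: "real \<times> real \<times> real"
    obtain x1 x2 x3 where z: "z = (x1, x2, x3)" by (cases z) auto
    show "(case z of (x1, x2, x3) \<Rightarrow> g1 x1 * g2 x2 * g3 x3) * hmm_density3 p0 Q f z
     = (\<Sum>j1\<in>UNIV. \<Sum>j2\<in>UNIV. \<Sum>j3\<in>UNIV. p0 $ j1 * Q $ j1 $ j2 * Q $ j2 $ j3 * T j1 j2 j3 z)"
      unfolding z T_def hmm_density3_def
      by (simp add: sum_distrib_left sum_distrib_right algebra_simps)
  qed
  show ?thesis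
    unfolding EH_def eq
    by (simp add: integral_sum integrable_sum Ti Te mult.assoc)
qed


lemma minv:
  fixes A :: "real^'n^'n"
  assumes "invertible A"
  shows "A ** matrix_inv A = mat 1" "matrix_inv A ** A = mat 1"
proof -
  have "\<exists>A'::real^'n^'n. A ** A' = mat 1 \<and> A' ** A = mat 1" using assms by (simp add: invertible_def)
  then have "A ** matrix_inv A = mat 1 \<and> matrix_inv A ** A = mat 1"
    unfolding matrix_inv_def by (rule someI_ex)
  then show "A ** matrix_inv A = mat 1" "matrix_inv A ** A = mat 1" by auto
qed

lemma la:
  fixes A C D :: "real^'n^'n"
  assumes inv: "invertible (A ** C)"
  shows "invertible C" "matrix_inv (A ** C) ** (A ** D ** C) = matrix_inv C ** D ** C"
proof -
  have "(matrix_inv (A ** C) ** A) ** C = mat 1"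
    using minv(2)[OF inv] by (simp add: matrix_mul_assoc)
  then show iC: "invertible C" using invertible_left_inverse by blast
  have e: "matrix_inv (A ** C) ** A = matrix_inv C"
  proof -
    have "matrix_inv (A ** C) ** A = (matrix_inv (A ** C) ** A) ** (C ** matrix_inv C)"
      using minv(1)[OF iC] by simp
    also have "\<dots> = ((matrix_inv (A ** C) ** A) ** C) ** matrix_inv C"
      by (simp add: matrix_mul_assoc)
    also have "\<dots> = matrix_inv C"
      using minv(2)[OF inv] by (simp add: matrix_mul_assoc)
    finally show ?thesis .
  qed
  show "matrix_inv (A ** C) ** (A ** D ** C) = matrix_inv C ** D ** C"
    using e by (metis matrix_mul_assoc)
qed

lemma entry:
  fixes Om :: "real^'j^'l" and p0 d :: "real^'j" and Q :: "real^'j^'j"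
  shows "(Om ** diag_mat p0 ** Q ** diag_mat d ** Q ** transpose Om) $ l $ m =
    (\<Sum>j1\<in>UNIV. \<Sum>j2\<in>UNIV. \<Sum>j3\<in>UNIV. p0 $ j1 * Q $ j1 $ j2 * Q $ j2 $ j3 * Om $ l $ j1 * d $ j2 * Om $ m $ j3)"
  apply (simp add: matrix_matrix_mult_def diag_mat_def transpose_def if_distrib sum_distrib_left sum_distrib_right algebra_simps cong: if_cong)
  apply (subst sum.swap)
  apply (subst (2) sum.swap)
  apply (rule sum.cong[OF refl])
  apply (subst sum.swap)
  apply (simp add: mult_ac)
  done

theorem lemma11:
  fixes p0 :: "real^'j::finite" and Q :: "real^'j^'j" and f :: "'j \<Rightarrow> real \<Rightarrow> real"
    and K :: "real \<Rightarrow> real" and CK :: real and L :: nat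
    and h :: "'l::finite \<Rightarrow> real \<Rightarrow> real"
  assumes hmm: "hmm_params p0 Q f"
    and K_bounded: "bounded (range K)"
    and K_lip: "CK-lipschitz_on UNIV K"
    and K_supp: "\<forall>y. \<bar>y\<bar> > 1 \<longrightarrow> K y = 0"
    and h_meas: "\<forall>l. h l \<in> borel_measurable borel"
    and M_fin: "\<forall>x l m. EH_integrable p0 Q f (\<lambda>(x1, x2, x3). h l x1 * KL K L x x2 * h m x3)"
    and P_fin: "\<forall>l m. EH_integrable p0 Q f (\<lambda>(x1, x2, x3). h l x1 * h m x3)"
    and O_fin: "\<forall>l j. integrable lborel (\<lambda>x. h l x * f j x)"
  shows "(\<forall>x. Mx p0 Q f K L h x
            = Omat f h ** diag_mat p0 ** Q ** Dx f K L x ** Q ** transpose (Omat f h))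
       \<and> Pmat p0 Q f h = Omat f h ** diag_mat p0 ** (Q ** Q) ** transpose (Omat f h)
       \<and> (\<forall>V :: real^'j^'l.
            invertible (transpose V ** Pmat p0 Q f h ** V) \<longrightarrow>
              invertible (Q ** transpose (Omat f h) ** V)
            \<and> (\<forall>x. matrix_inv (transpose V ** Pmat p0 Q f h ** V)
                       ** (transpose V ** Mx p0 Q f K L h x ** V)
                   = matrix_inv (Q ** transpose (Omat f h) ** V) ** Dx f K L x
                       ** (Q ** transpose (Omat f h) ** V))
            \<and> (\<exists>S :: real^'j^'j. invertible S \<and>
                 (\<forall>x. matrix_inv (transpose V ** Pmat p0 Q f h ** V)
                        ** (transpose V ** Mx p0 Q f K L h x ** V)
                      = matrix_inv S ** diag_mat (\<chi> j. KL_apply K L (f j) x) ** S)))"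
proof -
  have hp: "\<And>j. f j \<in> borel_measurable borel \<and> (\<forall>x. 0 \<le> f j x) \<and> integrable lborel (f j) \<and> integral\<^sup>L lborel (f j) = 1"
    using hmm unfolding hmm_params_def by blast
  have Kc: "continuous_on UNIV K" using K_lip by (rule lipschitz_on_continuous_on)
  have Km[measurable]: "K \<in> borel_measurable borel" using Kc by (rule borel_measurable_continuous_onI)
  obtain B where B: "\<And>y. \<bar>K y\<bar> \<le> B" using K_bounded unfolding bounded_iff by auto
  have KLi: "integrable lborel (\<lambda>y. KL K L x y * f j y)" for x j
  proof (rule Bochner_Integration.integrable_bound[where f="\<lambda>y. (2 ^ L * B) * f j y"])
    show "integrable lborel (\<lambda>y. (2 ^ L * B) * f j y)" using hp[of j] by simp
    show "(\<lambda>y. KL K L x y * f j y) \<in> borel_measurable lborel"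
    proof -
      have [measurable]: "f j \<in> borel_measurable borel" using hp[of j] by blast
      show ?thesis unfolding KL_def by measurable
    qed
    show "AE y in lborel. norm (KL K L x y * f j y) \<le> norm (2 ^ L * B * f j y)"
    proof (rule AE_I2)
      fix y
      have "\<bar>KL K L x y\<bar> \<le> 2 ^ L * B" unfolding KL_def using B[of "2 ^ L * (x - y)"] by (simp add: abs_mult)
      then have "\<bar>KL K L x y\<bar> * f j y \<le> 2 ^ L * B * f j y"
        using hp[of j] by (intro mult_right_mono) auto
      then show "norm (KL K L x y * f j y) \<le> norm (2 ^ L * B * f j y)"
        using hp[of j] B[of 0] by (simp add: abs_mult)
    qed
  qed
  have onei: "integrable lborel (\<lambda>y. 1 * f j y)" for j using hp[of j] by simp
  let ?O = "Omat f h"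
  have Oe: "?O $ l $ j = (LINT x|lborel. h l x * f j x)" for l j
    unfolding Omat_def EH_cond1_def by simp
  have Mform: "Mx p0 Q f K L h x = ?O ** diag_mat p0 ** Q ** Dx f K L x ** Q ** transpose ?O" for x
  proof -
    have "Mx p0 Q f K L h x $ l $ m = (?O ** diag_mat p0 ** Q ** Dx f K L x ** Q ** transpose ?O) $ l $ m" for l m
    proof -
      have "Mx p0 Q f K L h x $ l $ m = EH p0 Q f (\<lambda>(x1, x2, x3). h l x1 * KL K L x x2 * h m x3)"
        unfolding Mx_def by simp
      also have "\<dots> = (\<Sum>j1\<in>UNIV. \<Sum>j2\<in>UNIV. \<Sum>j3\<in>UNIV. p0 $ j1 * Q $ j1 $ j2 * Q $ j2 $ j3 *
           (LINT x|lborel. h l x * f j1 x) * (LINT y|lborel. KL K L x y * f j2 y) * (LINT x|lborel. h m x * f j3 x))"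
        by (rule EH_sep) (use O_fin KLi in auto)
      also have "\<dots> = (?O ** diag_mat p0 ** Q ** Dx f K L x ** Q ** transpose ?O) $ l $ m"
        unfolding Dx_def entry by (simp add: Oe KL_apply_def mult_ac)
      finally show ?thesis .
    qed
    then show ?thesis by (simp add: vec_eq_iff)
  qed
  have Pform: "Pmat p0 Q f h = ?O ** diag_mat p0 ** (Q ** Q) ** transpose ?O"
  proof -
    have d1: "diag_mat (\<chi> j. 1) = (mat 1 :: real^'j^'j)"
      by (simp add: diag_mat_def mat_def vec_eq_iff)
    have QQ: "Q ** Q = Q ** diag_mat (\<chi> j. 1) ** Q" by (simp add: d1)
    have "Pmat p0 Q f h $ l $ m = (?O ** diag_mat p0 ** Q ** diag_mat (\<chi> j. 1) ** Q ** transpose ?O) $ l $ m" for l m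
    proof -
      have "Pmat p0 Q f h $ l $ m = EH p0 Q f (\<lambda>(x1, x2, x3). h l x1 * (\<lambda>_. 1) x2 * h m x3)"
        unfolding Pmat_def by simp
      also have "\<dots> = (\<Sum>j1\<in>UNIV. \<Sum>j2\<in>UNIV. \<Sum>j3\<in>UNIV. p0 $ j1 * Q $ j1 $ j2 * Q $ j2 $ j3 *
           (LINT x|lborel. h l x * f j1 x) * (LINT y|lborel. (\<lambda>_. 1) y * f j2 y) * (LINT x|lborel. h m x * f j3 x))"
        by (rule EH_sep) (use O_fin onei in auto)
      also have "\<dots> = (?O ** diag_mat p0 ** Q ** diag_mat (\<chi> j. 1) ** Q ** transpose ?O) $ l $ m"
        unfolding entry by (simp add: Oe hp)
      finally show ?thesis .
    qed
    then show ?thesis unfolding QQ by (simp add: vec_eq_iff matrix_mul_assoc)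
  qed
  show ?thesis
  proof (intro conjI allI impI)
    show "Mx p0 Q f K L h x = ?O ** diag_mat p0 ** Q ** Dx f K L x ** Q ** transpose ?O" for x
      by (rule Mform)
    show "Pmat p0 Q f h = ?O ** diag_mat p0 ** (Q ** Q) ** transpose ?O" by (rule Pform)
    fix V :: "real^'j^'l"
    assume inv: "invertible (transpose V ** Pmat p0 Q f h ** V)"
    define A where "A = transpose V ** ?O ** diag_mat p0 ** Q"
    define C where "C = Q ** transpose ?O ** V"
    have PA: "transpose V ** Pmat p0 Q f h ** V = A ** C"
      unfolding Pform A_def C_def by (simp add: matrix_mul_assoc)
    have MA: "transpose V ** Mx p0 Q f K L h x ** V = A ** Dx f K L x ** C" for x
      unfolding Mform A_def C_def by (simp add: matrix_mul_assoc)
    have invAC: "invertible (A ** C)" using inv PA by simp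
    show "invertible (Q ** transpose ?O ** V)" using la(1)[OF invAC] C_def by simp
    show "matrix_inv (transpose V ** Pmat p0 Q f h ** V) ** (transpose V ** Mx p0 Q f K L h x ** V)
        = matrix_inv (Q ** transpose ?O ** V) ** Dx f K L x ** (Q ** transpose ?O ** V)" for x
      using la(2)[OF invAC, of "Dx f K L x"] unfolding PA MA C_def by simp
    show "\<exists>S :: real^'j^'j. invertible S \<and>
                 (\<forall>x. matrix_inv (transpose V ** Pmat p0 Q f h ** V)
                        ** (transpose V ** Mx p0 Q f K L h x ** V)
                      = matrix_inv S ** diag_mat (\<chi> j. KL_apply K L (f j) x) ** S)"
      by (rule exI[of _ C]) (use la[OF invAC] in \<open>simp add: PA MA Dx_def\<close>)
  qed
qed

end
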